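(* Let $\ell>0$ and let $\{\rho_k\}_{k\ge1}$, $\{\sigma_k\}_{k\ge2}$ be real constants satisfying $$\lim_{k\to\infty}\left|\frac{\sigma_{k+1}}{\sigma_k}\right|<\frac{1}{2\ell},\qquad \lim_{k\to\infty}\left|\frac{\rho_{k+1}}{\rho_k}\right|<\frac{1}{2\ell}.$$ Then for all $x\in[0,\infty)$ and $\xi\in[-1,1]$ the series $$\alpha(x,\xi)=\sum_{k=1}^\infty \rho_k\,\mathcal{P}_k(x)\,P^0_k(\xi)\,(x\ell)^k,\qquad \omega(x,\xi)=\sqrt{1-\xi^2}+\sum_{k=2}^\infty \sigma_k\,\mathcal{S}_k(x)\,P^1_{k-1}(\xi)\,(x\ell)^k$$ converge.
   Context: $\mathcal{P}_k(x)={}_2F_1\!\left(\frac{k}{2},\frac{k+1}{2};\frac{2k+3}{2};-x^2\right)$ and $\mathcal{S}_k(x)={}_2F_1\!\left(\frac{k}{2},\frac{k+1}{2};\frac{2k+1}{2};-x^2\right)$, with ${}_2F_1$ the Gauss hypergeometric function. $P^0_l(\xi)=\frac{1}{2^l l!}\frac{d^l}{d\xi^l}(\xi^2-1)^l$ is the Legendre polynomial and $P^1_l(\xi)=(1-\xi^2)^{1/2}\frac{d}{d\xi}P^0_l(\xi)$ the associated Legendre function of order 1. These series are the gauge fields of the $\mathfrak{su}(\infty)$ Einstein–Yang–Mills solutions expanded in the anti-de Sitter radius $\ell$, with $x=r/\ell$. *)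

theory Defs
  imports "HOL-Analysis.Analysis"
begin

definition hyp2F1_series :: "real \<Rightarrow> real \<Rightarrow> real \<Rightarrow> real \<Rightarrow> real" where
  "hyp2F1_series a b c z =
     (\<Sum>n. pochhammer a n * pochhammer b n / (pochhammer c n * fact n) * z ^ n)"

text \<open>Gauss hypergeometric function on the real half-line z < 1: the power series
  for |z| < 1, and its analytic continuation via the Pfaff transformation
  2F1(a,b;c;z) = (1-z)^(-a) 2F1(a,c-b;c;z/(z-1)) for z <= -1
  (where z/(z-1) lies in [1/2,1)). Values for z >= 1 are never used.\<close>
definition hyp2F1 :: "real \<Rightarrow> real \<Rightarrow> real \<Rightarrow> real \<Rightarrow> real" where
  "hyp2F1 a b c z =
     (if \<bar>z\<bar> < 1 then hyp2F1_series a b c z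
      else (1 - z) powr (- a) * hyp2F1_series a (c - b) c (z / (z - 1)))"

definition calP :: "nat \<Rightarrow> real \<Rightarrow> real" where
  "calP k x = hyp2F1 (real k / 2) ((real k + 1) / 2) ((2 * real k + 3) / 2) (- (x ^ 2))"

definition calS :: "nat \<Rightarrow> real \<Rightarrow> real" where
  "calS k x = hyp2F1 (real k / 2) ((real k + 1) / 2) ((2 * real k + 1) / 2) (- (x ^ 2))"

definition legendreP :: "nat \<Rightarrow> real \<Rightarrow> real" where
  "legendreP l \<xi> = 1 / (2 ^ l * fact l) * (deriv ^^ l) (\<lambda>t. (t ^ 2 - 1) ^ l) \<xi>"

definition assocLegendre1 :: "nat \<Rightarrow> real \<Rightarrow> real" where
  "assocLegendre1 l \<xi> = sqrt (1 - \<xi> ^ 2) * deriv (legendreP l) \<xi>"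

end

theory Submission
  imports Defs "HOL-Computational_Algebra.Polynomial"
begin


lemma deriv_poly_fun: "deriv (poly p) = poly (pderiv p)"
  by (rule ext) (rule DERIV_imp_deriv, rule poly_DERIV)

lemma funpow_deriv_poly: "(deriv ^^ n) (poly p) = poly ((pderiv ^^ n) p)"
  by (induction n) (simp_all add: deriv_poly_fun)

lemma funpow_pderiv_smult: "(pderiv ^^ n) (smult c p) = smult c ((pderiv ^^ n) p)"
  by (induction n) (simp_all add: pderiv_smult)

definition Xp :: "real poly" where "Xp = [:0,1:]"
definition Ypol :: "real poly" where "Ypol = [:-1,0,1:]"
definition Up :: "nat \<Rightarrow> real poly" where "Up l = Ypol ^ l"
definition Lp :: "nat \<Rightarrow> real poly" where
  "Lp l = smult (1 / (2 ^ l * fact l)) ((pderiv ^^ l) (Up l))"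

lemma poly_Xp[simp]: "poly Xp x = x" by (simp add: Xp_def)
lemma poly_Ypol[simp]: "poly Ypol x = x^2 - 1" by (simp add: Ypol_def power2_eq_square)
lemma pderiv_Xp[simp]: "pderiv Xp = 1" by (simp add: Xp_def pderiv_pCons)
lemma pderiv_Y[simp]: "pderiv Ypol = smult 2 Xp"
  by (simp add: Ypol_def Xp_def pderiv_pCons)

lemma legendreP_poly: "legendreP l = poly (Lp l)"
proof -
  have "(\<lambda>t::real. (t ^ 2 - 1) ^ l) = poly (Up l)"
    by (rule ext) (simp add: Up_def poly_power)
  then show ?thesis
    by (simp add: legendreP_def Lp_def funpow_deriv_poly fun_eq_iff)
qed

lemma Up_base: "Ypol * pderiv (Up l) = smult (2 * real l) (Xp * Up l)"
proof (cases l)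
  case 0 then show ?thesis by (simp add: Up_def)
next
  case (Suc m)
  have "pderiv (Up l) = smult (of_nat (Suc m)) (Ypol ^ m) * smult 2 Xp"
    unfolding Up_def Suc pderiv_power_Suc by simp
  then show ?thesis
    by (simp add: Up_def Suc algebra_simps)
qed

lemma Up_G:
  "Ypol * (pderiv ^^ (m+2)) (Up l) + smult (2*real (m+1) - 2*real l) (Xp * (pderiv ^^ (m+1)) (Up l))
    + smult (real (m+1) * real m - 2 * real l * real (m+1)) ((pderiv ^^ m) (Up l)) = 0"
proof (induction m)
  case 0
  have "pderiv (Ypol * pderiv (Up l)) = pderiv (smult (2 * real l) (Xp * Up l))"
    by (simp only: Up_base)
  then have "Ypol * pderiv (pderiv (Up l)) + pderiv (Up l) * smult 2 Xp
     = smult (2 * real l) (Xp * pderiv (Up l) + Up l)"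
    by (simp add: pderiv_mult pderiv_smult)
  then have "poly (Ypol * pderiv (pderiv (Up l)) + pderiv (Up l) * smult 2 Xp) x
     = poly (smult (2 * real l) (Xp * pderiv (Up l) + Up l)) x" for x by simp
  then have "poly (Ypol * (pderiv ^^ (0+2)) (Up l) + smult (2*real (0+1) - 2*real l) (Xp * (pderiv ^^ (0+1)) (Up l))
    + smult (real (0+1) * real 0 - 2 * real l * real (0+1)) ((pderiv ^^ 0) (Up l))) x = poly 0 x" for x
    by (simp add: numeral_2_eq_2 algebra_simps)
  then show ?case
    using poly_eq_poly_eq_iff by blast
next
  case (Suc m)
  let ?D = "\<lambda>j. (pderiv ^^ j) (Up l)"
  have "pderiv (Ypol * ?D (m+2) + smult (2*real (m+1) - 2*real l) (Xp * ?D (m+1))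
    + smult (real (m+1) * real m - 2 * real l * real (m+1)) (?D m)) = 0"
    using Suc by simp
  then have "Ypol * ?D (m+3) + ?D (m+2) * smult 2 Xp
     + smult (2*real (m+1) - 2*real l) (Xp * ?D (m+2) + ?D (m+1))
     + smult (real (m+1) * real m - 2 * real l * real (m+1)) (?D (m+1)) = 0"
    by (simp add: pderiv_mult pderiv_smult pderiv_add numeral_3_eq_3 numeral_2_eq_2)
  then have "poly (Ypol * ?D (m+3) + ?D (m+2) * smult 2 Xp
     + smult (2*real (m+1) - 2*real l) (Xp * ?D (m+2) + ?D (m+1))
     + smult (real (m+1) * real m - 2 * real l * real (m+1)) (?D (m+1))) x = 0" for x
    by simp
  then have "poly (Ypol * ?D (Suc m+2) + smult (2*real (Suc m+1) - 2*real l) (Xp * ?D (Suc m+1))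
    + smult (real (Suc m+1) * real (Suc m) - 2 * real l * real (Suc m+1)) (?D (Suc m))) x = poly 0 x" for x
    by (simp add: numeral_3_eq_3 numeral_2_eq_2 algebra_simps)
  then show ?case
    using poly_eq_poly_eq_iff by blast
qed


lemma Lp_ode:
  "(x^2 - 1) * poly (pderiv (pderiv (Lp l))) x + 2 * x * poly (pderiv (Lp l)) x
     - real l * (real l + 1) * poly (Lp l) x = 0"
proof -
  let ?D = "\<lambda>j. (pderiv ^^ j) (Up l)"
  define k where "k = 1 / (2 ^ l * fact l :: real)"
  have Le: "Lp l = smult k (?D l)" by (simp add: Lp_def k_def)
  have "poly (Ypol * ?D (l+2) + smult (2*real (l+1) - 2*real l) (Xp * ?D (l+1))
    + smult (real (l+1) * real l - 2 * real l * real (l+1)) (?D l)) x = 0"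
    using Up_G[of l l] by simp
  then have "(x^2 - 1) * poly (?D (l+2)) x + 2 * x * poly (?D (l+1)) x
     - real l * (real l + 1) * poly (?D l) x = 0"
    by (simp add: algebra_simps)
  then have "k * ((x^2 - 1) * poly (?D (l+2)) x + 2 * x * poly (?D (l+1)) x
     - real l * (real l + 1) * poly (?D l) x) = 0" by simp
  moreover have "pderiv (pderiv (Lp l)) = smult k (?D (l+2))" "pderiv (Lp l) = smult k (?D (l+1))"
    by (simp_all add: Le pderiv_smult)
  ultimately show ?thesis
    by (simp add: Le algebra_simps)
qed

lemma endpt: "poly ((pderiv ^^ m) ([:-a,1:]^m * q)) (a::real) = fact m * poly q a"
proof (induction m arbitrary: q)
  case 0 then show ?case by simp
next
  case (Suc m)
  have d1: "pderiv [:-a,1:] = 1" by (simp add: pderiv_pCons)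
  have "pderiv ([:-a,1:]^Suc m * q) = [:-a,1:]^Suc m * pderiv q + q * (smult (of_nat (Suc m)) ([:-a,1:]^m) * 1)"
    by (simp only: pderiv_mult pderiv_power_Suc d1)
  also have "\<dots> = [:-a,1:]^m * (smult (of_nat (Suc m)) q + [:-a,1:] * pderiv q)"
    by (rule poly_eq_poly_eq_iff[THEN iffD1]) (simp add: fun_eq_iff algebra_simps)
  finally have "(pderiv ^^ Suc m) ([:-a,1:]^Suc m * q) = (pderiv ^^ m) ([:-a,1:]^m * (smult (of_nat (Suc m)) q + [:-a,1:] * pderiv q))"
    by (simp add: funpow_Suc_right del: funpow.simps)
  then have "poly ((pderiv ^^ Suc m) ([:-a,1:]^Suc m * q)) a
     = fact m * poly (smult (of_nat (Suc m)) q + [:-a,1:] * pderiv q) a"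
    using Suc.IH by simp
  also have "\<dots> = fact (Suc m) * poly q a" by (simp add: algebra_simps)
  finally show ?case .
qed

lemma Ypol_fact: "Ypol = [:-1,1:] * [:1,1:]"
  by (simp add: Ypol_def)

lemma Lp_one: "poly (Lp l) 1 = 1"
proof -
  have "Up l = [:-1,1:]^l * [:1,1:]^l" unfolding Up_def Ypol_fact power_mult_distrib by (rule refl)
  then have "poly ((pderiv ^^ l) (Up l)) 1 = fact l * 2^l"
    using endpt[of l 1 "[:1,1:]^l"] by (simp add: poly_power)
  then show ?thesis by (simp add: Lp_def)
qed

lemma Lp_mone: "poly (Lp l) (-1) = (-1)^l"
proof -
  have "Up l = [:1,1:]^l * [:-1,1:]^l" unfolding Up_def Ypol_fact power_mult_distrib by (simp add: mult.commute)
  moreover have "poly ((pderiv ^^ l) ([:1,1:]^l * [:-1,1:]^l)) (-1) = fact l * (-2::real)^l"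
    using endpt[of l "-1" "[:-1,1:]^l"] by (simp add: poly_power)
  ultimately have "poly ((pderiv ^^ l) (Up l)) (-1) = fact l * (-2::real)^l" by simp
  then show ?thesis by (simp add: Lp_def power_minus')
qed


lemma Lp_energy:
  assumes l: "l \<ge> 1" and t: "-1 \<le> t" "t \<le> 1"
  shows "poly (Lp l) t ^ 2 + (1 - t^2) * poly (pderiv (Lp l)) t ^ 2 / (real l * (real l + 1)) \<le> 1"
proof -
  define K where "K = real l * (real l + 1)"
  have K: "K > 0" using l by (simp add: K_def)
  define P where "P = poly (Lp l)"
  define P1 where "P1 = poly (pderiv (Lp l))"
  define P2 where "P2 = poly (pderiv (pderiv (Lp l)))"
  define f where "f = (\<lambda>t. P t ^ 2 + (1 - t^2) * P1 t ^ 2 / K)"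
  have ode: "(1 - s^2) * P2 s = 2 * s * P1 s - K * P s" for s
    using Lp_ode[of s l] unfolding P_def P1_def P2_def K_def by (simp add: algebra_simps)
  have dP: "DERIV P s :> P1 s" "DERIV P1 s :> P2 s" for s
    unfolding P_def P1_def P2_def by (rule poly_DERIV)+
  have der: "DERIV f s :> 2 * s * P1 s ^ 2 / K" for s
  proof -
    have "DERIV f s :> (2 * P s * P1 s + (- 2 * s * P1 s ^ 2 + (1 - s^2) * (2 * P1 s * P2 s)) / K)"
      unfolding f_def using K
      by (auto intro!: derivative_eq_intros dP simp: power2_eq_square field_simps)
    moreover have "2 * P s * P1 s + (- 2 * s * P1 s ^ 2 + (1 - s^2) * (2 * P1 s * P2 s)) / K
        = 2 * s * P1 s ^ 2 / K"
    proof -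
      have "(1 - s^2) * (2 * P1 s * P2 s) = 2 * P1 s * ((1 - s^2) * P2 s)" by simp
      also have "\<dots> = 2 * P1 s * (2 * s * P1 s - K * P s)" by (simp add: ode)
      finally show ?thesis using K by (simp add: field_simps power2_eq_square)
    qed
    ultimately show ?thesis by simp
  qed
  have f1: "f 1 = 1" "f (-1) = 1"
    by (simp_all add: f_def P_def Lp_one Lp_mone power_mult[symmetric] mult.commute[of l 2])
  have "f t \<le> 1"
  proof (cases "t \<ge> 0")
    case True
    have "f t \<le> f 1"
      by (rule DERIV_nonneg_imp_nondecreasing[OF t(2)])
         (use der K True in \<open>auto intro!: exI divide_nonneg_pos mult_nonneg_nonneg\<close>)
    then show ?thesis using f1 by simp
  next
    case False
    have neg: "2 * x * P1 x ^ 2 / K \<le> 0" if "x \<le> 0" for x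
    proof -
      have "2 * x * P1 x ^ 2 \<le> 0" using mult_nonpos_nonneg[of "2*x" "P1 x ^ 2"] that by simp
      then show ?thesis using K by (simp add: divide_nonpos_pos)
    qed
    have "f (-1) \<ge> f t"
      by (rule DERIV_nonpos_imp_nonincreasing[OF t(1)])
         (use der neg False in \<open>auto intro!: exI\<close>)
    then show ?thesis using f1 by simp
  qed
  then show ?thesis unfolding f_def P_def P1_def K_def .
qed

lemma legendre_bound:
  assumes "l \<ge> 1" "\<xi> \<in> {-1..1}"
  shows "\<bar>legendreP l \<xi>\<bar> \<le> 1"
proof -
  have "0 \<le> (1 - \<xi>^2) * poly (pderiv (Lp l)) \<xi> ^ 2 / (real l * (real l + 1))"
    using assms(2) by (auto intro!: mult_nonneg_nonneg divide_nonneg_nonneg simp: abs_square_le_1)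
  then have "poly (Lp l) \<xi> ^ 2 \<le> 1" using Lp_energy[of l \<xi>] assms by auto
  then show ?thesis by (simp add: legendreP_poly abs_square_le_1)
qed

lemma assoc_bound:
  assumes "l \<ge> 1" "\<xi> \<in> {-1..1}"
  shows "\<bar>assocLegendre1 l \<xi>\<bar> \<le> real l + 1"
proof -
  have h1: "0 \<le> 1 - \<xi>^2" using assms(2) by (auto simp: abs_square_le_1)
  have K: "real l * (real l + 1) > 0" using assms by simp
  have p0: "poly (Lp l) \<xi> ^ 2 \<ge> 0" by simp
  have "poly (Lp l) \<xi> ^ 2 + (1 - \<xi>^2) * poly (pderiv (Lp l)) \<xi> ^ 2 / (real l * (real l + 1)) \<le> 1"
    using Lp_energy[of l \<xi>] assms by auto
  then have "(1 - \<xi>^2) * poly (pderiv (Lp l)) \<xi> ^ 2 / (real l * (real l + 1)) \<le> 1"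
    using p0 by linarith
  then have "(1 - \<xi>^2) * poly (pderiv (Lp l)) \<xi> ^ 2 \<le> real l * (real l + 1)"
    using K by (simp add: pos_divide_le_eq)
  also have "\<dots> \<le> (real l + 1) ^ 2" by (simp add: power2_eq_square algebra_simps)
  finally have "\<bar>assocLegendre1 l \<xi>\<bar> ^ 2 \<le> (real l + 1) ^ 2"
    using h1 by (simp add: assocLegendre1_def legendreP_poly deriv_poly_fun power_mult_distrib)
  then show ?thesis by (rule power2_le_imp_le) simp
qed



definition hcoef :: "real \<Rightarrow> real \<Rightarrow> real \<Rightarrow> nat \<Rightarrow> real" where
  "hcoef a b c n = pochhammer a n * pochhammer b n / (pochhammer c n * fact n)"

lemma hcoef_Suc: "c > 0 \<Longrightarrow> hcoef a b c (Suc n) = hcoef a b c n * ((a + real n) * (b + real n) / ((c + real n) * (real n + 1)))"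
  unfolding hcoef_def
  by (simp add: pochhammer_Suc field_simps pochhammer_eq_0_iff)

lemma hcoef_nonneg: "a > 0 \<Longrightarrow> b > 0 \<Longrightarrow> c > 0 \<Longrightarrow> hcoef a b c n \<ge> 0"
  unfolding hcoef_def by (intro divide_nonneg_pos mult_nonneg_nonneg mult_pos_pos)
     (auto intro: less_imp_le pochhammer_pos)

lemma frac_cmp: "(p::real) * s \<le> q * r \<Longrightarrow> r > 0 \<Longrightarrow> s > 0 \<Longrightarrow> p / r \<le> q / s"
  by (simp add: divide_simps mult.commute)

lemma hcoef_cmp:
  fixes k :: nat and a b c :: real
  assumes k: "k \<ge> 1" and pos: "a > 0" "b > 0" "c > 0"
    and cond: "\<And>n::nat. (a + real n) * (b + real n) * (real k + real n)
        \<le> (real k / 2 + real n) * ((real k + 1) / 2 + real n) * (c + real n)"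
  shows "hcoef a b c n \<le> hcoef (real k / 2) ((real k + 1) / 2) (real k) n"
proof (induction n)
  case 0 then show ?case by (simp add: hcoef_def)
next
  case (Suc n)
  have kp: "real k > 0" using k by simp
  have r: "(a + real n) * (b + real n) / ((c + real n) * (real n + 1))
     \<le> (real k / 2 + real n) * ((real k + 1) / 2 + real n) / ((real k + real n) * (real n + 1))"
  proof -
    have p1: "(c + real n) * (real n + 1) > 0" "(real k + real n) * (real n + 1) > 0" using pos kp by auto
    have "(a + real n) * (b + real n) * ((real k + real n) * (real n + 1))
       \<le> (real k / 2 + real n) * ((real k + 1) / 2 + real n) * ((c + real n) * (real n + 1))"
    proof -
      have "(a + real n) * (b + real n) * (real k + real n) * (real n + 1)
          \<le> (real k / 2 + real n) * ((real k + 1) / 2 + real n) * (c + real n) * (real n + 1)"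
        by (rule mult_right_mono[OF cond[of n]]) simp
      then show ?thesis by (simp only: mult.assoc)
    qed
    then show ?thesis using p1 by (rule frac_cmp)
  qed
  have "hcoef a b c (Suc n) = hcoef a b c n * ((a + real n) * (b + real n) / ((c + real n) * (real n + 1)))"
    by (rule hcoef_Suc[OF pos(3)])
  also have "\<dots> \<le> hcoef (real k / 2) ((real k + 1) / 2) (real k) n
      * ((real k / 2 + real n) * ((real k + 1) / 2 + real n) / ((real k + real n) * (real n + 1)))"
    using Suc r pos kp by (intro mult_mono hcoef_nonneg divide_nonneg_pos mult_nonneg_nonneg) auto
  also have "\<dots> = hcoef (real k / 2) ((real k + 1) / 2) (real k) (Suc n)"
    using kp by (simp add: hcoef_Suc)
  finally show ?case .
qed

lemma hcoef_E:
  fixes k :: nat assumes k: "k \<ge> 1"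
  shows "hcoef (real k / 2) ((real k + 1) / 2) (real k) n \<le> 2 ^ k"
proof -
  have f4: "of_nat (2^(2*n)) = (4::real)^n" by (simp add: power_mult)
  have d: "pochhammer (real k) (2 * n) = 4^n * pochhammer (real k / 2) n * pochhammer ((real k + 1) / 2) n"
    using pochhammer_double[of "real k / 2" n] unfolding f4 by (simp add: add_divide_distrib)
  have pr: "pochhammer (real k) (2 * n) = pochhammer (real k) n * pochhammer (real k + real n) n"
    using pochhammer_product'[of "real k" n n] by (simp add: mult_2)
  have kn: "pochhammer (real k) n > 0" using k by (intro pochhammer_pos) simp
  have e1: "hcoef (real k / 2) ((real k + 1) / 2) (real k) n = pochhammer (real k + real n) n / fact n / 4 ^ n"
    unfolding hcoef_def using d pr kn
    by (simp add: field_simps)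
  have "pochhammer (real k + real n) n / fact n = (real (k + 2*n - 1) gchoose n)"
    using k by (simp add: gbinomial_pochhammer' of_nat_diff algebra_simps)
  also have "\<dots> = real ((k + 2*n - 1) choose n)" by (simp add: binomial_gbinomial)
  also have "\<dots> \<le> 2 ^ (k + 2*n - 1)" using binomial_le_pow2[of "k+2*n-1" n]
    by (metis of_nat_le_iff of_nat_numeral of_nat_power)
  also have "\<dots> \<le> 2 ^ (k + 2*n)" by (intro power_increasing) auto
  finally have "hcoef (real k / 2) ((real k + 1) / 2) (real k) n \<le> 2 ^ (k + 2*n) / 4^n"
    unfolding e1 by (rule divide_right_mono) simp
  also have "\<dots> = 2 ^ k" by (simp add: power_add power_mult)
  finally show ?thesis .
qed


lemma series_bound:
  assumes z: "\<bar>z\<bar> < 1" and nn: "\<And>n. 0 \<le> hcoef a b c n" and le: "\<And>n. hcoef a b c n \<le> B"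
  shows "\<bar>hyp2F1_series a b c z\<bar> \<le> B / (1 - \<bar>z\<bar>)"
proof -
  define f where "f = (\<lambda>n. hcoef a b c n * z ^ n)"
  have g: "summable (\<lambda>n. B * \<bar>z\<bar> ^ n)" using z by (intro summable_mult summable_geometric) simp
  have fle: "norm (f n) \<le> B * \<bar>z\<bar> ^ n" for n
    unfolding f_def using nn[of n] le[of n]
    by (simp add: abs_mult power_abs mult_right_mono)
  have s: "summable (\<lambda>n. norm (f n))"
    by (rule summable_comparison_test[OF _ g]) (use fle in auto)
  have "hyp2F1_series a b c z = suminf f" by (simp add: hyp2F1_series_def f_def hcoef_def)
  then have "\<bar>hyp2F1_series a b c z\<bar> \<le> (\<Sum>n. norm (f n))"
    using summable_norm[OF s] by simp
  also have "\<dots> \<le> (\<Sum>n. B * \<bar>z\<bar> ^ n)" by (rule suminf_le[OF fle s g])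
  also have "\<dots> = B / (1 - \<bar>z\<bar>)" using z by (simp add: suminf_mult suminf_geometric divide_simps)
  finally show ?thesis .
qed

lemma powr_aux:
  assumes x: "x \<ge> (1::real)"
  shows "x ^ k * (1 + x^2) powr (- (real k / 2)) \<le> 1"
proof -
  have xp: "x > 0" using x by simp
  have "(x^2) powr (real k / 2) = (x powr 2) powr (real k / 2)"
    using powr_realpow[of x 2] xp by simp
  also have "\<dots> = x powr (real k)" by (simp add: powr_powr)
  also have "\<dots> = x ^ k" using xp by (simp add: powr_realpow)
  finally have "x ^ k = (x^2) powr (real k / 2)" by simp
  also have "\<dots> \<le> (1 + x^2) powr (real k / 2)" by (intro powr_mono2) auto
  finally have "x ^ k \<le> (1 + x^2) powr (real k / 2)" .
  moreover have "(1 + x^2) powr (real k / 2) > 0"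
  proof -
    have "1 + x^2 \<noteq> 0" using zero_le_power2[of x] by linarith
    then show ?thesis by simp
  qed
  ultimately show ?thesis by (simp add: powr_minus divide_simps)
qed

lemma hyp_main:
  fixes k :: nat and c x :: real
  assumes k: "k \<ge> 1" and c1: "c \<ge> real k" and c2: "c > (real k + 1) / 2"
    and cond2: "\<And>n::nat. (c - (real k + 1) / 2 + real n) * (real k + real n) \<le> ((real k + 1) / 2 + real n) * (c + real n)"
    and x: "x \<ge> 0"
  shows "x ^ k * \<bar>hyp2F1 (real k / 2) ((real k + 1) / 2) c (- (x^2))\<bar>
           \<le> 2 ^ k * (if x < 1 then 1 / (1 - x^2) else 1 + x^2)"
proof -
  have kp: "real k > 0" using k by simp
  show ?thesis
  proof (cases "x < 1")
    case True
    have x2: "x^2 < 1" using True x by (simp add: power_less_one_iff abs_square_less_1)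
    have cb: "hcoef (real k / 2) ((real k + 1) / 2) c n \<le> 2 ^ k" for n
    proof -
      have "hcoef (real k / 2) ((real k + 1) / 2) c n \<le> hcoef (real k / 2) ((real k + 1) / 2) (real k) n"
      proof (rule hcoef_cmp[OF k])
        fix n :: nat
        show "(real k / 2 + real n) * ((real k + 1) / 2 + real n) * (real k + real n)
          \<le> (real k / 2 + real n) * ((real k + 1) / 2 + real n) * (c + real n)"
          using c1 by (intro mult_left_mono) auto
      qed (use kp c2 in auto)
      then show ?thesis using hcoef_E[OF k, of n] by linarith
    qed
    have "\<bar>hyp2F1 (real k / 2) ((real k + 1) / 2) c (- (x^2))\<bar> \<le> 2 ^ k / (1 - x^2)"
      using series_bound[of "- (x^2)" "real k / 2" "(real k + 1) / 2" c "2^k", OF _ hcoef_nonneg cb] x2 kp c2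
      by (simp add: hyp2F1_def)
    moreover have "x ^ k \<le> 1" using True x by (simp add: power_le_one)
    ultimately have "x ^ k * \<bar>hyp2F1 (real k / 2) ((real k + 1) / 2) c (- (x^2))\<bar> \<le> 1 * (2 ^ k / (1 - x^2))"
      by (intro mult_mono) (auto simp: x)
    then show ?thesis using True by simp
  next
    case False
    have x1: "x \<ge> 1" using False by simp
    have "1 \<le> x^2" using x1 one_le_power[of x 2] by simp
    then have x2: "\<not> \<bar>- (x^2)\<bar> < 1" by simp
    define w where "w = x^2 / (1 + x^2)"
    have px: "1 + x^2 > 0" using zero_le_power2[of x] by linarith
    have wz: "- (x^2) / (- (x^2) - 1) = w" unfolding w_def using px
      by (simp add: divide_simps) (simp add: algebra_simps)
    have w0: "0 \<le> w" "w < 1" unfolding w_def using px by (auto simp: divide_simps)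
    have w1: "1 - \<bar>w\<bar> = 1 / (1 + x^2)" using w0 px unfolding w_def
      by (simp add: divide_simps)
    have cb: "hcoef (real k / 2) (c - (real k + 1) / 2) c n \<le> 2 ^ k" for n
    proof -
      have "hcoef (real k / 2) (c - (real k + 1) / 2) c n \<le> hcoef (real k / 2) ((real k + 1) / 2) (real k) n"
      proof (rule hcoef_cmp[OF k])
        fix n :: nat
        have "(real k / 2 + real n) * ((c - (real k + 1) / 2 + real n) * (real k + real n))
          \<le> (real k / 2 + real n) * (((real k + 1) / 2 + real n) * (c + real n))"
          using cond2[of n] by (intro mult_left_mono) auto
        then show "(real k / 2 + real n) * (c - (real k + 1) / 2 + real n) * (real k + real n)
          \<le> (real k / 2 + real n) * ((real k + 1) / 2 + real n) * (c + real n)"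
          by (simp only: mult.assoc)
      qed (use kp c2 in auto)
      then show ?thesis using hcoef_E[OF k, of n] by linarith
    qed
    have sb: "\<bar>hyp2F1_series (real k / 2) (c - (real k + 1) / 2) c w\<bar> \<le> 2 ^ k * (1 + x^2)"
      using series_bound[of w "real k / 2" "c - (real k + 1) / 2" c "2^k", OF _ hcoef_nonneg cb] w0 w1 kp c2
      by simp
    have hv: "hyp2F1 (real k / 2) ((real k + 1) / 2) c (- (x^2))
        = (1 + x^2) powr (- (real k / 2)) * hyp2F1_series (real k / 2) (c - (real k + 1) / 2) c w"
      using x2 wz by (simp add: hyp2F1_def)
    have "x ^ k * \<bar>hyp2F1 (real k / 2) ((real k + 1) / 2) c (- (x^2))\<bar>
        = (x ^ k * (1 + x^2) powr (- (real k / 2))) * \<bar>hyp2F1_series (real k / 2) (c - (real k + 1) / 2) c w\<bar>"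
      unfolding hv by (simp add: abs_mult)
    also have "\<dots> \<le> 1 * (2 ^ k * (1 + x^2))"
      by (intro mult_mono powr_aux x1 sb) (auto simp: x)
    finally show ?thesis using False by simp
  qed
qed



lemma summ_aux:
  fixes f :: "nat \<Rightarrow> real" and ell :: real
  assumes ell: "ell > 0" and nz: "eventually (\<lambda>k. f k \<noteq> 0) sequentially"
    and lim: "((\<lambda>k. \<bar>f (k + 1) / f k\<bar>) \<longlongrightarrow> L) sequentially" and L: "L < 1 / (2 * ell)"
  shows "summable (\<lambda>k. (real k + 1) * (\<bar>f k\<bar> * (2 * ell) ^ k))"
proof -
  define q where "q = (L + 1 / (2 * ell)) / 2"
  have Lq: "L < q" using L by (simp add: q_def)
  have L0: "L \<ge> 0" using lim by (rule tendsto_lowerbound) auto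
  define c where "c = 2 * ell * q"
  have c1: "c < 1" using L ell by (simp add: c_def q_def field_simps)
  have c0: "c \<ge> 0" using L0 ell Lq by (simp add: c_def)
  define d where "d = (1 + c) / 2"
  have d1: "d < 1" using c1 by (simp add: d_def)
  have ev1: "eventually (\<lambda>k. \<bar>f (k + 1) / f k\<bar> < q) sequentially"
    using order_tendstoD(2)[OF lim Lq] .
  have "eventually (\<lambda>k. real k * (1 - c) \<ge> 3 * c - 1) sequentially"
  proof -
    obtain N :: nat where N: "real N \<ge> (3 * c - 1) / (1 - c)" using real_arch_simple by blast
    show ?thesis unfolding eventually_sequentially
    proof (intro exI allI impI)
      fix n assume "n \<ge> N"
      then have "real n \<ge> (3 * c - 1) / (1 - c)" using N by linarith
      then show "real n * (1 - c) \<ge> 3 * c - 1" using c1 by (simp add: pos_divide_le_eq)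
    qed
  qed
  then have "eventually (\<lambda>k. \<bar>f (k + 1) / f k\<bar> < q \<and> f k \<noteq> 0 \<and> real k * (1 - c) \<ge> 3 * c - 1) sequentially"
    using ev1 nz by eventually_elim auto
  then obtain N where N: "\<And>n. n \<ge> N \<Longrightarrow> \<bar>f (n + 1) / f n\<bar> < q \<and> f n \<noteq> 0 \<and> real n * (1 - c) \<ge> 3 * c - 1"
    unfolding eventually_sequentially by blast
  show ?thesis
  proof (rule summable_ratio_test[OF d1])
    fix n assume n: "n \<ge> N"
    have a1: "\<bar>f (n+1)\<bar> / \<bar>f n\<bar> < q" "\<bar>f n\<bar> > 0" using N[OF n] by (auto simp: abs_divide)
    then have "\<bar>f (n+1)\<bar> < q * \<bar>f n\<bar>" by (simp add: pos_divide_less_eq)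
    then have fq: "\<bar>f (Suc n)\<bar> \<le> q * \<bar>f n\<bar>" by simp
    have pe: "(2 * ell) ^ n \<ge> 0" using ell by simp
    have "\<bar>f (Suc n)\<bar> * (2 * ell) ^ Suc n \<le> (q * \<bar>f n\<bar>) * (2 * ell) ^ Suc n"
      using fq ell by (intro mult_right_mono) auto
    also have "\<dots> = c * (\<bar>f n\<bar> * (2 * ell) ^ n)" by (simp add: c_def)
    finally have hh: "\<bar>f (Suc n)\<bar> * (2 * ell) ^ Suc n \<le> c * (\<bar>f n\<bar> * (2 * ell) ^ n)" .
    have kc: "(real n + 2) * c \<le> d * (real n + 1)"
      using N[OF n] by (simp add: d_def algebra_simps)
    have "norm ((real (Suc n) + 1) * (\<bar>f (Suc n)\<bar> * (2 * ell) ^ Suc n))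
        = (real n + 2) * (\<bar>f (Suc n)\<bar> * (2 * ell) ^ Suc n)" using ell by simp
    also have "\<dots> \<le> (real n + 2) * (c * (\<bar>f n\<bar> * (2 * ell) ^ n))"
      using hh by (intro mult_left_mono) auto
    also have "\<dots> = ((real n + 2) * c) * (\<bar>f n\<bar> * (2 * ell) ^ n)" by simp
    also have "\<dots> \<le> (d * (real n + 1)) * (\<bar>f n\<bar> * (2 * ell) ^ n)"
      using kc pe by (intro mult_right_mono) auto
    also have "\<dots> = d * norm ((real n + 1) * (\<bar>f n\<bar> * (2 * ell) ^ n))" using ell by simp
    finally show "norm ((real (Suc n) + 1) * (\<bar>f (Suc n)\<bar> * (2 * ell) ^ Suc n))
        \<le> d * norm ((real n + 1) * (\<bar>f n\<bar> * (2 * ell) ^ n))" .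
  qed
qed


lemma calP_bound:
  assumes k: "k \<ge> 1" and x: "x \<ge> 0"
  shows "x ^ k * \<bar>calP k x\<bar> \<le> 2 ^ k * (if x < 1 then 1 / (1 - x^2) else 1 + x^2)"
  unfolding calP_def
proof (rule hyp_main[OF k])
  fix n :: nat
  show "((2 * real k + 3) / 2 - (real k + 1) / 2 + real n) * (real k + real n)
      \<le> ((real k + 1) / 2 + real n) * ((2 * real k + 3) / 2 + real n)"
    by (simp add: field_simps)
qed (use x in auto)

lemma calS_bound:
  assumes k: "k \<ge> 1" and x: "x \<ge> 0"
  shows "x ^ k * \<bar>calS k x\<bar> \<le> 2 ^ k * (if x < 1 then 1 / (1 - x^2) else 1 + x^2)"
  unfolding calS_def
proof (rule hyp_main[OF k])
  fix n :: nat
  show "((2 * real k + 1) / 2 - (real k + 1) / 2 + real n) * (real k + real n)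
      \<le> ((real k + 1) / 2 + real n) * ((2 * real k + 1) / 2 + real n)"
    by (simp add: field_simps)
qed (use x k in auto)

theorem proposition2:
  fixes ell :: real and \<rho> \<sigma> :: "nat \<Rightarrow> real" and x \<xi> :: real
  assumes "ell > 0"
    and "eventually (\<lambda>k. \<sigma> k \<noteq> 0) sequentially"
    and "eventually (\<lambda>k. \<rho> k \<noteq> 0) sequentially"
    and "\<exists>L. ((\<lambda>k. \<bar>\<sigma> (k + 1) / \<sigma> k\<bar>) \<longlongrightarrow> L) sequentially \<and> L < 1 / (2 * ell)"
    and "\<exists>L. ((\<lambda>k. \<bar>\<rho> (k + 1) / \<rho> k\<bar>) \<longlongrightarrow> L) sequentially \<and> L < 1 / (2 * ell)"
    and "x \<ge> 0" and "\<xi> \<in> {-1..1}"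
  shows "summable (\<lambda>k. \<rho> (k + 1) * calP (k + 1) x * legendreP (k + 1) \<xi> * (x * ell) ^ (k + 1)) \<and>
         summable (\<lambda>k. \<sigma> (k + 2) * calS (k + 2) x * assocLegendre1 (k + 1) \<xi> * (x * ell) ^ (k + 2))"
proof -
  note ell = assms(1) and x = assms(6) and xi = assms(7)
  define M where "M = (if x < 1 then 1 / (1 - x^2) else 1 + x^2)"
  have M0: "M \<ge> 0"
  proof (cases "x < 1")
    case True
    then have "x^2 < 1" using x by (simp add: abs_square_less_1)
    then show ?thesis using True by (simp add: M_def)
  next
    case False then show ?thesis by (simp add: M_def)
  qed
  obtain Lr where Lr: "((\<lambda>k. \<bar>\<rho> (k + 1) / \<rho> k\<bar>) \<longlongrightarrow> Lr) sequentially" "Lr < 1 / (2 * ell)"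
    using assms(5) by blast
  obtain Ls where Ls: "((\<lambda>k. \<bar>\<sigma> (k + 1) / \<sigma> k\<bar>) \<longlongrightarrow> Ls) sequentially" "Ls < 1 / (2 * ell)"
    using assms(4) by blast
  define gr where "gr = (\<lambda>k. (real k + 1) * (\<bar>\<rho> k\<bar> * (2 * ell) ^ k))"
  define gs where "gs = (\<lambda>k. (real k + 1) * (\<bar>\<sigma> k\<bar> * (2 * ell) ^ k))"
  have sr: "summable gr" unfolding gr_def by (rule summ_aux[OF ell assms(3) Lr])
  have ss: "summable gs" unfolding gs_def by (rule summ_aux[OF ell assms(2) Ls])
  have sr1: "summable (\<lambda>k. M * gr (k + 1))"
    by (intro summable_mult) (rule summable_ignore_initial_segment[OF sr])
  have ss2: "summable (\<lambda>k. M * gs (k + 2))"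
    by (intro summable_mult) (rule summable_ignore_initial_segment[OF ss])
  have A: "summable (\<lambda>k. \<rho> (k + 1) * calP (k + 1) x * legendreP (k + 1) \<xi> * (x * ell) ^ (k + 1))"
  proof (rule summable_comparison_test[OF _ sr1], intro exI allI impI)
    fix k :: nat
    have cb: "x ^ (k+1) * \<bar>calP (k+1) x\<bar> \<le> 2 ^ (k+1) * M"
      unfolding M_def by (rule calP_bound) (use x in auto)
    have lb: "\<bar>legendreP (k + 1) \<xi>\<bar> \<le> 1" by (rule legendre_bound) (use xi in auto)
    have "norm (\<rho> (k + 1) * calP (k + 1) x * legendreP (k + 1) \<xi> * (x * ell) ^ (k + 1))
        = (x ^ (k+1) * \<bar>calP (k+1) x\<bar>) * \<bar>legendreP (k + 1) \<xi>\<bar> * (\<bar>\<rho> (k + 1)\<bar> * ell ^ (k+1))"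
      using x ell by (simp add: abs_mult power_mult_distrib)
    also have "\<dots> \<le> (2 ^ (k+1) * M) * 1 * (\<bar>\<rho> (k + 1)\<bar> * ell ^ (k+1))"
      by (rule mult_right_mono[OF mult_mono[OF cb lb]]) (use M0 ell in auto)
    also have "\<dots> = M * (\<bar>\<rho> (k + 1)\<bar> * (2 * ell) ^ (k+1))" by (simp add: power_mult_distrib)
    also have "\<dots> \<le> M * gr (k + 1)"
    proof -
      have y0: "0 \<le> \<bar>\<rho> (k + 1)\<bar> * (2 * ell) ^ (k+1)" using ell by simp
      have "1 * (\<bar>\<rho> (k + 1)\<bar> * (2 * ell) ^ (k+1)) \<le> (real (k+1) + 1) * (\<bar>\<rho> (k + 1)\<bar> * (2 * ell) ^ (k+1))"
        by (rule mult_right_mono[OF _ y0]) simp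
      then show ?thesis unfolding gr_def using M0 by (intro mult_left_mono) auto
    qed
    finally show "norm (\<rho> (k + 1) * calP (k + 1) x * legendreP (k + 1) \<xi> * (x * ell) ^ (k + 1)) \<le> M * gr (k + 1)" .
  qed
  have B: "summable (\<lambda>k. \<sigma> (k + 2) * calS (k + 2) x * assocLegendre1 (k + 1) \<xi> * (x * ell) ^ (k + 2))"
  proof (rule summable_comparison_test[OF _ ss2], intro exI allI impI)
    fix k :: nat
    have cb: "x ^ (k+2) * \<bar>calS (k+2) x\<bar> \<le> 2 ^ (k+2) * M"
      unfolding M_def by (rule calS_bound) (use x in auto)
    have lb: "\<bar>assocLegendre1 (k + 1) \<xi>\<bar> \<le> real (k + 1) + 1" by (rule assoc_bound) (use xi in auto)
    have "norm (\<sigma> (k + 2) * calS (k + 2) x * assocLegendre1 (k + 1) \<xi> * (x * ell) ^ (k + 2))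
        = (x ^ (k+2) * \<bar>calS (k+2) x\<bar>) * \<bar>assocLegendre1 (k + 1) \<xi>\<bar> * (\<bar>\<sigma> (k + 2)\<bar> * ell ^ (k+2))"
      using x ell by (simp add: abs_mult power_mult_distrib)
    also have "\<dots> \<le> (2 ^ (k+2) * M) * (real (k + 1) + 1) * (\<bar>\<sigma> (k + 2)\<bar> * ell ^ (k+2))"
      by (rule mult_right_mono[OF mult_mono[OF cb lb]]) (use M0 ell in auto)
    also have "\<dots> = M * ((real (k + 2)) * (\<bar>\<sigma> (k + 2)\<bar> * (2 * ell) ^ (k+2)))"
      by (simp add: power_mult_distrib algebra_simps)
    also have "\<dots> \<le> M * gs (k + 2)"
    proof -
      have y0: "0 \<le> \<bar>\<sigma> (k + 2)\<bar> * (2 * ell) ^ (k+2)" using ell by simp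
      have "real (k+2) * (\<bar>\<sigma> (k + 2)\<bar> * (2 * ell) ^ (k+2)) \<le> (real (k+2) + 1) * (\<bar>\<sigma> (k + 2)\<bar> * (2 * ell) ^ (k+2))"
        by (rule mult_right_mono[OF _ y0]) simp
      then show ?thesis unfolding gs_def using M0 by (intro mult_left_mono) auto
    qed
    finally show "norm (\<sigma> (k + 2) * calS (k + 2) x * assocLegendre1 (k + 1) \<xi> * (x * ell) ^ (k + 2)) \<le> M * gs (k + 2)" .
  qed
  show ?thesis using A B by blast
qed

end
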